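(* Let $\mathcal{K}$ be a commutative ring and $\mathcal{A}$ a (possibly noncommutative) $\mathcal{K}$-ring, regarded as an $\mathcal{A}$-bimodule over itself. If $\Delta_1$ is an $n$-order and $\Delta_2$ an $m$-order $\mathcal{A}$-valued left differential operator on $\mathcal{A}$ (in the sense defined in the context), then the composition $\Delta_1\circ\Delta_2$ is an $(n+m)$-order $\mathcal{A}$-valued left differential operator on $\mathcal{A}$.
   Context: A $\mathcal{K}$-ring is a unital associative $\mathcal{K}$-algebra with $1\neq0$. $\mathrm{Hom}_{\mathcal{K}}(\mathcal{A},\mathcal{A})$ is an $\mathcal{A}$-bimodule via $(a\Phi)(x)=a\Phi(x)$ and $(\Phi\bullet a)(x)=\Phi(ax)$; put $\delta_a\Phi:=a\Phi-\Phi\bullet a$. For such a bimodule $M$ its center is $\{x\in M: ax=x\bullet a\ \forall a\in\mathcal{A}\}$. Define $\mathcal{Z}_0$ = center of $\mathrm{Hom}_{\mathcal{K}}(\mathcal{A},\mathcal{A})$, $\mathcal{I}_0$ = sub-bimodule generated by $\mathcal{Z}_0$; inductively for $r\ge1$, $\mathcal{Z}_r$ = center of the quotient bimodule $\mathrm{Hom}_{\mathcal{K}}(\mathcal{A},\mathcal{A})/\mathcal{I}_{r-1}$, $\overline{\mathcal{Z}}_r$ = sub-bimodule generated by $\mathcal{Z}_r$, and $\mathcal{I}_r$ the sub-bimodule with $\mathcal{I}_r/\mathcal{I}_{r-1}=\overline{\mathcal{Z}}_r$. An $r$-order $\mathcal{A}$-valued (left) differential operator on $\mathcal{A}$ is an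 element of $\mathcal{I}_r$ (Lunts–Rosenberg). *)

theory Defs
  imports Main
begin

definition K_ring :: "('k::comm_ring_1 \<Rightarrow> 'a::ring_1 \<Rightarrow> 'a) \<Rightarrow> bool" where
  "K_ring sm \<longleftrightarrow>
     (\<forall>c x y. sm c (x + y) = sm c x + sm c y) \<and>
     (\<forall>c d x. sm (c + d) x = sm c x + sm d x) \<and>
     (\<forall>c d x. sm (c * d) x = sm c (sm d x)) \<and>
     (\<forall>x. sm 1 x = x) \<and>
     (\<forall>c x y. sm c (x * y) = sm c x * y) \<and>
     (\<forall>c x y. sm c (x * y) = x * sm c y)"

definition HomK :: "('k::comm_ring_1 \<Rightarrow> 'a::ring_1 \<Rightarrow> 'a) \<Rightarrow> ('a \<Rightarrow> 'a) set" where
  "HomK sm = {\<Phi>. (\<forall>x y. \<Phi> (x + y) = \<Phi> x + \<Phi> y) \<and> (\<forall>c x. \<Phi> (sm c x) = sm c (\<Phi> x))}"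

definition lact :: "'a::ring_1 \<Rightarrow> ('a \<Rightarrow> 'a) \<Rightarrow> ('a \<Rightarrow> 'a)" where
  "lact a \<Phi> = (\<lambda>x. a * \<Phi> x)"

definition ract :: "('a::ring_1 \<Rightarrow> 'a) \<Rightarrow> 'a \<Rightarrow> ('a \<Rightarrow> 'a)" where
  "ract \<Phi> a = (\<lambda>x. \<Phi> (a * x))"

definition delta :: "'a::ring_1 \<Rightarrow> ('a \<Rightarrow> 'a) \<Rightarrow> ('a \<Rightarrow> 'a)" where
  "delta a \<Phi> = (\<lambda>x. lact a \<Phi> x - ract \<Phi> a x)"

text \<open>Sub-bimodule of Hom_K(A,A) generated by a set S of K-linear maps
  (closure under 0, +, left and right A-action; K-scalars act through K\<cdot>1 \<subseteq> A,
  negation is the left action of -1).\<close>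
inductive_set gen_bimod :: "('a::ring_1 \<Rightarrow> 'a) set \<Rightarrow> ('a \<Rightarrow> 'a) set"
  for S :: "('a \<Rightarrow> 'a) set" where
  gen_base: "\<Phi> \<in> S \<Longrightarrow> \<Phi> \<in> gen_bimod S"
| gen_zero: "(\<lambda>x. 0) \<in> gen_bimod S"
| gen_add: "\<Phi> \<in> gen_bimod S \<Longrightarrow> \<Psi> \<in> gen_bimod S \<Longrightarrow> (\<lambda>x. \<Phi> x + \<Psi> x) \<in> gen_bimod S"
| gen_lact: "\<Phi> \<in> gen_bimod S \<Longrightarrow> lact a \<Phi> \<in> gen_bimod S"
| gen_ract: "\<Phi> \<in> gen_bimod S \<Longrightarrow> ract \<Phi> a \<in> gen_bimod S"

text \<open>I_0 is generated by the center Z_0 of Hom_K(A,A).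
  For r \<ge> 1, the center of Hom_K(A,A)/I_{r-1} consists of the classes of those \<Phi>
  with \<delta>_a \<Phi> \<in> I_{r-1} for all a; I_r is the preimage of the sub-bimodule it
  generates, i.e. the sub-bimodule generated by these \<Phi> together with I_{r-1}.\<close>
fun diff_ops :: "('k::comm_ring_1 \<Rightarrow> 'a::ring_1 \<Rightarrow> 'a) \<Rightarrow> nat \<Rightarrow> ('a \<Rightarrow> 'a) set" where
  "diff_ops sm 0 = gen_bimod {\<Phi> \<in> HomK sm. \<forall>a. lact a \<Phi> = ract \<Phi> a}"
| "diff_ops sm (Suc r) =
     gen_bimod ({\<Phi> \<in> HomK sm. \<forall>a. delta a \<Phi> \<in> diff_ops sm r} \<union> diff_ops sm r)"

end

theory Submission
  imports Defs
begin

lemma ex_gen: "\<exists>S. diff_ops sm r = gen_bimod S"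
  by (cases r) auto

lemma d_zero: "(\<lambda>x. 0) \<in> diff_ops sm r"
  using ex_gen[of sm r] by (auto intro: gen_bimod.gen_zero)

lemma d_add: "\<Phi> \<in> diff_ops sm r \<Longrightarrow> \<Psi> \<in> diff_ops sm r \<Longrightarrow> (\<lambda>x. \<Phi> x + \<Psi> x) \<in> diff_ops sm r"
  using ex_gen[of sm r] by (auto intro: gen_bimod.gen_add)

lemma d_lact: "\<Phi> \<in> diff_ops sm r \<Longrightarrow> lact a \<Phi> \<in> diff_ops sm r"
  using ex_gen[of sm r] by (auto intro: gen_bimod.gen_lact)

lemma d_ract: "\<Phi> \<in> diff_ops sm r \<Longrightarrow> ract \<Phi> a \<in> diff_ops sm r"
  using ex_gen[of sm r] by (auto intro: gen_bimod.gen_ract)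

lemma d_diff: "\<Phi> \<in> diff_ops sm r \<Longrightarrow> \<Psi> \<in> diff_ops sm r \<Longrightarrow> (\<lambda>x. \<Phi> x - \<Psi> x) \<in> diff_ops sm r"
proof -
  assume a: "\<Phi> \<in> diff_ops sm r" "\<Psi> \<in> diff_ops sm r"
  have "lact (-1) \<Psi> \<in> diff_ops sm r" using a d_lact by blast
  hence "(\<lambda>x. \<Phi> x + lact (-1) \<Psi> x) \<in> diff_ops sm r" using a d_add by blast
  thus ?thesis by (simp add: lact_def)
qed

lemma mono1: "diff_ops sm r \<subseteq> diff_ops sm (Suc r)"
  by (auto intro: gen_bimod.gen_base)

lemma T_closed:
  assumes K: "K_ring sm"
    and Tl: "\<And>a \<Phi>. T (lact a \<Phi>) = lact a (T \<Phi>)"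
    and Tr: "\<And>a \<Phi>. T (ract \<Phi> a) = ract (T \<Phi>) a"
    and Tadd: "\<And>\<Phi> \<Psi>. T (\<lambda>x. \<Phi> x + \<Psi> x) = (\<lambda>x. T \<Phi> x + T \<Psi> x)"
    and Tsub: "\<And>\<Phi> \<Psi>. T (\<lambda>x. \<Phi> x - \<Psi> x) = (\<lambda>x. T \<Phi> x - T \<Psi> x)"
    and T0: "T (\<lambda>x. 0) = (\<lambda>x. 0)"
    and Thom: "\<And>\<Phi>. \<Phi> \<in> HomK sm \<Longrightarrow> T \<Phi> \<in> HomK sm"
  shows "\<Phi> \<in> diff_ops sm r \<Longrightarrow> T \<Phi> \<in> diff_ops sm r"
proof (induction r arbitrary: \<Phi>)
  case 0
  from 0 show ?case
    unfolding diff_ops.simps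
  proof (induction rule: gen_bimod.induct)
    case (gen_base \<Phi>)
    hence "\<forall>a. lact a (T \<Phi>) = ract (T \<Phi>) a" by (simp flip: Tl Tr)
    with gen_base show ?case by (intro gen_bimod.gen_base) (auto simp: Thom)
  next
    case gen_zero
    then show ?case by (simp add: T0 gen_bimod.gen_zero)
  next
    case (gen_add \<Phi> \<Psi>)
    then show ?case by (simp add: Tadd gen_bimod.gen_add)
  next
    case (gen_lact \<Phi> a)
    then show ?case by (simp add: Tl gen_bimod.gen_lact)
  next
    case (gen_ract \<Phi> a)
    then show ?case by (simp add: Tr gen_bimod.gen_ract)
  qed
next
  case (Suc r)
  from Suc.prems show ?case
    unfolding diff_ops.simps
  proof (induction rule: gen_bimod.induct)
    case (gen_base \<Phi>)
    then show ?case
    proof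
      assume h: "\<Phi> \<in> {\<Phi> \<in> HomK sm. \<forall>a. delta a \<Phi> \<in> diff_ops sm r}"
      have "\<And>a. delta a (T \<Phi>) = T (delta a \<Phi>)"
        unfolding delta_def by (simp add: Tsub Tl Tr)
      with h Suc.IH have "T \<Phi> \<in> {\<Phi> \<in> HomK sm. \<forall>a. delta a \<Phi> \<in> diff_ops sm r}"
        by (auto simp: Thom)
      thus ?thesis by (intro gen_bimod.gen_base) auto
    next
      assume "\<Phi> \<in> diff_ops sm r"
      with Suc.IH show ?thesis by (intro gen_bimod.gen_base) auto
    qed
  next
    case gen_zero
    then show ?case by (simp add: T0 gen_bimod.gen_zero)
  next
    case (gen_add \<Phi> \<Psi>)
    then show ?case by (simp add: Tadd gen_bimod.gen_add)
  next
    case (gen_lact \<Phi> a)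
    then show ?case by (simp add: Tl gen_bimod.gen_lact)
  next
    case (gen_ract \<Phi> a)
    then show ?case by (simp add: Tr gen_bimod.gen_ract)
  qed
qed

lemma rho_closed:
  assumes K: "K_ring sm" and P: "\<Phi> \<in> diff_ops sm r"
  shows "(\<lambda>x. \<Phi> x * c) \<in> diff_ops sm r"
proof -
  have "(\<lambda>\<Psi> x. \<Psi> x * c) \<Phi> \<in> diff_ops sm r"
  proof (rule T_closed[OF K _ _ _ _ _ _ P])
    show "\<And>a \<Phi>. (\<lambda>x. lact a \<Phi> x * c) = lact a (\<lambda>x. \<Phi> x * c)"
      by (simp add: lact_def mult.assoc)
    show "\<And>a \<Phi>. (\<lambda>x. ract \<Phi> a x * c) = ract (\<lambda>x. \<Phi> x * c) a"
      by (simp add: ract_def)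
    show "\<And>\<Phi> \<Psi>. (\<lambda>x. (\<Phi> x + \<Psi> x) * c) = (\<lambda>x. \<Phi> x * c + \<Psi> x * c)"
      by (simp add: distrib_right)
    show "\<And>\<Phi> \<Psi>. (\<lambda>x. (\<Phi> x - \<Psi> x) * c) = (\<lambda>x. \<Phi> x * c - \<Psi> x * c)"
      by (simp add: left_diff_distrib)
    show "(\<lambda>x. 0 * c) = (\<lambda>x. 0)" by simp
    fix \<Phi> assume "\<Phi> \<in> HomK sm"
    then show "(\<lambda>x. \<Phi> x * c) \<in> HomK sm"
      using K unfolding HomK_def K_ring_def by (simp add: distrib_right)
  qed
  thus ?thesis by simp
qed

lemma lam_closed:
  assumes K: "K_ring sm" and P: "\<Phi> \<in> diff_ops sm r"
  shows "(\<lambda>x. \<Phi> (x * c)) \<in> diff_ops sm r"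
proof -
  have "(\<lambda>\<Psi> x. \<Psi> (x * c)) \<Phi> \<in> diff_ops sm r"
  proof (rule T_closed[OF K _ _ _ _ _ _ P])
    show "\<And>a \<Phi>. (\<lambda>x. lact a \<Phi> (x * c)) = lact a (\<lambda>x. \<Phi> (x * c))"
      by (simp add: lact_def)
    show "\<And>a \<Phi>. (\<lambda>x. ract \<Phi> a (x * c)) = ract (\<lambda>x. \<Phi> (x * c)) a"
      by (simp add: ract_def mult.assoc)
    show "\<And>\<Phi> \<Psi>. (\<lambda>x. \<Phi> (x * c) + \<Psi> (x * c)) = (\<lambda>x. \<Phi> (x * c) + \<Psi> (x * c))"
      by simp
    show "\<And>\<Phi> \<Psi>. (\<lambda>x. \<Phi> (x * c) - \<Psi> (x * c)) = (\<lambda>x. \<Phi> (x * c) - \<Psi> (x * c))"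
      by simp
    show "(\<lambda>x. 0) = (\<lambda>x. 0)" by simp
    fix \<Phi> assume "\<Phi> \<in> HomK sm"
    moreover from K have e: "\<And>k x. sm k x * c = sm k (x * c)" unfolding K_ring_def by simp
    ultimately show "(\<lambda>x. \<Phi> (x * c)) \<in> HomK sm"
      unfolding HomK_def by (simp add: distrib_right e)
  qed
  thus ?thesis by simp
qed

lemma Z0_form:
  assumes "\<forall>a. lact a \<Phi> = ract \<Phi> a"
  shows "\<Phi> y = y * \<Phi> 1"
proof -
  have "lact y \<Phi> 1 = ract \<Phi> y 1" using assms by simp
  thus ?thesis by (simp add: lact_def ract_def)
qed

lemma hom_sub:
  assumes "\<Phi> \<in> HomK sm"
  shows "\<Phi> (u - v) = \<Phi> u - \<Phi> v"
proof -
  have "\<Phi> u = \<Phi> ((u - v) + v)" by simp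
  also have "\<dots> = \<Phi> (u - v) + \<Phi> v" using assms unfolding HomK_def mem_Collect_eq by blast
  finally show ?thesis by (simp add: algebra_simps)
qed

lemma hom_zero:
  assumes "\<Phi> \<in> HomK sm"
  shows "\<Phi> 0 = 0"
  using hom_sub[OF assms, of 0 0] by simp

lemma inner:
  assumes "\<Psi> \<in> gen_bimod S"
    and base: "\<And>\<Psi>. \<Psi> \<in> S \<Longrightarrow> \<Phi> \<circ> \<Psi> \<in> diff_ops sm N"
    and hom: "\<Phi> \<in> HomK sm"
    and dl: "\<And>a \<Psi>. \<Psi> \<in> gen_bimod S \<Longrightarrow> (delta a \<Phi>) \<circ> \<Psi> \<in> diff_ops sm N"
  shows "\<Phi> \<circ> \<Psi> \<in> diff_ops sm N"
  using assms(1)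
proof (induction rule: gen_bimod.induct)
  case (gen_base \<Psi>)
  then show ?case using base by blast
next
  case gen_zero
  have "\<Phi> \<circ> (\<lambda>x::'a. 0) = (\<lambda>x. 0)" using hom_zero[OF hom] by (simp add: comp_def)
  then show ?case by (simp only: d_zero)
next
  case (gen_add \<Psi>1 \<Psi>2)
  have "\<Phi> \<circ> (\<lambda>x. \<Psi>1 x + \<Psi>2 x) = (\<lambda>x. (\<Phi> \<circ> \<Psi>1) x + (\<Phi> \<circ> \<Psi>2) x)"
    using hom by (simp add: comp_def HomK_def)
  then show ?case using gen_add d_add by simp
next
  case (gen_lact \<Psi> a)
  have eq: "\<Phi> \<circ> lact a \<Psi> = (\<lambda>x. lact a (\<Phi> \<circ> \<Psi>) x - ((delta a \<Phi>) \<circ> \<Psi>) x)"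
    by (simp add: comp_def delta_def lact_def ract_def)
  have 1: "lact a (\<Phi> \<circ> \<Psi>) \<in> diff_ops sm N" using gen_lact.IH by (rule d_lact)
  have 2: "(delta a \<Phi>) \<circ> \<Psi> \<in> diff_ops sm N" using gen_lact.hyps by (rule dl)
  show ?case unfolding eq by (rule d_diff[OF 1 2])
next
  case (gen_ract \<Psi> a)
  have eq: "\<Phi> \<circ> ract \<Psi> a = ract (\<Phi> \<circ> \<Psi>) a"
    by (simp add: comp_def ract_def)
  show ?case unfolding eq by (rule d_ract[OF gen_ract.IH])
qed

lemma Ccase:
  assumes K: "K_ring sm"
    and IHn: "\<And>m D1 D2. D1 \<in> diff_ops sm r \<Longrightarrow> D2 \<in> diff_ops sm m \<Longrightarrow> D1 \<circ> D2 \<in> diff_ops sm (r + m)"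
    and hom: "\<Phi> \<in> HomK sm"
    and dP: "\<forall>a. delta a \<Phi> \<in> diff_ops sm r"
  shows "\<Psi> \<in> diff_ops sm m \<Longrightarrow> \<Phi> \<circ> \<Psi> \<in> diff_ops sm (Suc r + m)"
proof (induction m arbitrary: \<Psi>)
  case 0
  have PhiI: "\<Phi> \<in> diff_ops sm (Suc r)" unfolding diff_ops.simps(2)
    by (rule gen_bimod.gen_base) (use hom dP in blast)
  show ?case
  proof (rule inner[where S="{\<Phi> \<in> HomK sm. \<forall>a. lact a \<Phi> = ract \<Phi> a}"])
    show "\<Psi> \<in> gen_bimod {\<Phi> \<in> HomK sm. \<forall>a. lact a \<Phi> = ract \<Phi> a}" using 0 by simp
  next
    fix \<Psi> assume h\<Psi>: "\<Psi> \<in> {\<Phi> \<in> HomK sm. \<forall>a. lact a \<Phi> = ract \<Phi> a}"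
    have z: "\<Psi> y = y * \<Psi> 1" for y by (rule Z0_form) (use h\<Psi> in blast)
    have eq: "\<Phi> \<circ> \<Psi> = (\<lambda>x. \<Phi> (x * \<Psi> 1))"
    proof
      fix x show "(\<Phi> \<circ> \<Psi>) x = \<Phi> (x * \<Psi> 1)"
        unfolding comp_apply by (rule arg_cong[OF z[of x], of \<Phi>])
    qed
    have "(\<lambda>x. \<Phi> (x * \<Psi> 1)) \<in> diff_ops sm (Suc r + 0)"
      using lam_closed[OF K PhiI] by (simp only: add_0_right)
    thus "\<Phi> \<circ> \<Psi> \<in> diff_ops sm (Suc r + 0)" unfolding eq .
  next
    show "\<Phi> \<in> HomK sm" by fact
  next
    fix a \<Psi> assume "\<Psi> \<in> gen_bimod {\<Phi> \<in> HomK sm. \<forall>a. lact a \<Phi> = ract \<Phi> a}"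
    hence "\<Psi> \<in> diff_ops sm 0" by simp
    hence "(delta a \<Phi>) \<circ> \<Psi> \<in> diff_ops sm (r + 0)" using IHn[OF dP[rule_format]] by blast
    thus "(delta a \<Phi>) \<circ> \<Psi> \<in> diff_ops sm (Suc r + 0)" using mono1[of sm "r + 0"] by (simp only: add_Suc subsetD)
  qed
next
  case (Suc s)
  show ?case
  proof (rule inner[where S="{\<Phi> \<in> HomK sm. \<forall>a. delta a \<Phi> \<in> diff_ops sm s} \<union> diff_ops sm s"])
    show "\<Psi> \<in> gen_bimod ({\<Phi> \<in> HomK sm. \<forall>a. delta a \<Phi> \<in> diff_ops sm s} \<union> diff_ops sm s)"
      using Suc.prems by simp
  next
    fix \<Psi> assume "\<Psi> \<in> {\<Phi> \<in> HomK sm. \<forall>a. delta a \<Phi> \<in> diff_ops sm s} \<union> diff_ops sm s"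
    then show "\<Phi> \<circ> \<Psi> \<in> diff_ops sm (Suc r + Suc s)"
    proof
      assume "\<Psi> \<in> diff_ops sm s"
      hence "\<Phi> \<circ> \<Psi> \<in> diff_ops sm (Suc r + s)" using Suc.IH by blast
      thus ?thesis by (metis mono1 subsetD add_Suc_right)
    next
      assume h: "\<Psi> \<in> {\<Phi> \<in> HomK sm. \<forall>a. delta a \<Phi> \<in> diff_ops sm s}"
      have PsiI: "\<Psi> \<in> diff_ops sm (Suc s)" unfolding diff_ops.simps(2)
        by (rule gen_bimod.gen_base) (use h in blast)
      have "\<Phi> \<circ> \<Psi> \<in> HomK sm" using hom h by (simp add: HomK_def)
      moreover have "delta a (\<Phi> \<circ> \<Psi>) \<in> diff_ops sm (Suc r + s)" for a
      proof -
        have eq: "delta a (\<Phi> \<circ> \<Psi>) = (\<lambda>x. ((delta a \<Phi>) \<circ> \<Psi>) x + (\<Phi> \<circ> (delta a \<Psi>)) x)"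
          using hom_sub[OF hom] by (simp add: delta_def lact_def ract_def comp_def)
        have 1: "(delta a \<Phi>) \<circ> \<Psi> \<in> diff_ops sm (Suc r + s)" using IHn[OF dP[rule_format] PsiI] by (simp only: add_Suc_shift)
        have 2: "\<Phi> \<circ> (delta a \<Psi>) \<in> diff_ops sm (Suc r + s)" using Suc.IH h by blast
        show ?thesis unfolding eq by (rule d_add[OF 1 2])
      qed
      ultimately have "\<Phi> \<circ> \<Psi> \<in> diff_ops sm (Suc (Suc r + s))"
        unfolding diff_ops.simps(2) by (intro gen_bimod.gen_base) blast
      thus ?thesis by (simp only: add_Suc_right)
    qed
  next
    show "\<Phi> \<in> HomK sm" by fact
  next
    fix a \<Psi> assume "\<Psi> \<in> gen_bimod ({\<Phi> \<in> HomK sm. \<forall>a. delta a \<Phi> \<in> diff_ops sm s} \<union> diff_ops sm s)"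
    hence "\<Psi> \<in> diff_ops sm (Suc s)" by simp
    hence "(delta a \<Phi>) \<circ> \<Psi> \<in> diff_ops sm (r + Suc s)" using IHn[OF dP[rule_format]] by blast
    thus "(delta a \<Phi>) \<circ> \<Psi> \<in> diff_ops sm (Suc r + Suc s)" by (metis mono1 subsetD add_Suc)
  qed
qed

lemma step_gen:
  assumes "D1 \<in> gen_bimod S"
    and base: "\<And>\<Phi> m D2. \<Phi> \<in> S \<Longrightarrow> D2 \<in> diff_ops sm m \<Longrightarrow> \<Phi> \<circ> D2 \<in> diff_ops sm (k + m)"
  shows "D2 \<in> diff_ops sm m \<Longrightarrow> D1 \<circ> D2 \<in> diff_ops sm (k + m)"
  using assms(1)
proof (induction arbitrary: D2 rule: gen_bimod.induct)
  case (gen_base \<Phi>)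
  show ?case by (rule base[OF gen_base.hyps gen_base.prems])
next
  case gen_zero
  have eq: "(\<lambda>x::'a. 0) \<circ> D2 = (\<lambda>x. 0)" by (simp add: comp_def)
  show ?case unfolding eq by (rule d_zero)
next
  case (gen_add \<Phi> \<Psi>)
  have eq: "(\<lambda>x. \<Phi> x + \<Psi> x) \<circ> D2 = (\<lambda>x. (\<Phi> \<circ> D2) x + (\<Psi> \<circ> D2) x)" by (simp add: comp_def)
  show ?case unfolding eq
    by (rule d_add[OF gen_add.IH(1)[OF gen_add.prems] gen_add.IH(2)[OF gen_add.prems]])
next
  case (gen_lact \<Phi> a)
  have eq: "lact a \<Phi> \<circ> D2 = lact a (\<Phi> \<circ> D2)" by (simp add: lact_def comp_def)
  show ?case unfolding eq by (rule d_lact[OF gen_lact.IH[OF gen_lact.prems]])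
next
  case (gen_ract \<Phi> a)
  have eq: "ract \<Phi> a \<circ> D2 = \<Phi> \<circ> lact a D2" by (simp add: lact_def ract_def comp_def)
  show ?case unfolding eq by (rule gen_ract.IH[OF d_lact[OF gen_ract.prems]])
qed

lemma main:
  assumes K: "K_ring sm"
  shows "D1 \<in> diff_ops sm n \<Longrightarrow> D2 \<in> diff_ops sm m \<Longrightarrow> D1 \<circ> D2 \<in> diff_ops sm (n + m)"
proof (induction n arbitrary: m D1 D2)
  case 0
  show ?case
  proof (rule step_gen[where S="{\<Phi> \<in> HomK sm. \<forall>a. lact a \<Phi> = ract \<Phi> a}"])
    show "D1 \<in> gen_bimod {\<Phi> \<in> HomK sm. \<forall>a. lact a \<Phi> = ract \<Phi> a}" using 0 by simp
    show "D2 \<in> diff_ops sm m" by fact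
  next
    fix \<Phi> m D2 assume h: "\<Phi> \<in> {\<Phi> \<in> HomK sm. \<forall>a. lact a \<Phi> = ract \<Phi> a}"
      and D2: "D2 \<in> diff_ops sm m"
    have z: "\<Phi> y = y * \<Phi> 1" for y by (rule Z0_form) (use h in blast)
    have eq: "\<Phi> \<circ> D2 = (\<lambda>x. D2 x * \<Phi> 1)"
    proof
      fix x show "(\<Phi> \<circ> D2) x = D2 x * \<Phi> 1" unfolding comp_apply by (rule z)
    qed
    have "(\<lambda>x. D2 x * \<Phi> 1) \<in> diff_ops sm (0 + m)"
      using rho_closed[OF K D2] by (simp only: add_0)
    thus "\<Phi> \<circ> D2 \<in> diff_ops sm (0 + m)" unfolding eq .
  qed
next
  case (Suc r)
  show ?case
  proof (rule step_gen[where S="{\<Phi> \<in> HomK sm. \<forall>a. delta a \<Phi> \<in> diff_ops sm r} \<union> diff_ops sm r"])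
    show "D1 \<in> gen_bimod ({\<Phi> \<in> HomK sm. \<forall>a. delta a \<Phi> \<in> diff_ops sm r} \<union> diff_ops sm r)"
      using Suc.prems by simp
    show "D2 \<in> diff_ops sm m" by fact
  next
    fix \<Phi> m D2 assume P: "\<Phi> \<in> {\<Phi> \<in> HomK sm. \<forall>a. delta a \<Phi> \<in> diff_ops sm r} \<union> diff_ops sm r"
      and D2: "D2 \<in> diff_ops sm m"
    from P show "\<Phi> \<circ> D2 \<in> diff_ops sm (Suc r + m)"
    proof
      assume "\<Phi> \<in> diff_ops sm r"
      hence "\<Phi> \<circ> D2 \<in> diff_ops sm (r + m)" using D2 by (rule Suc.IH)
      hence "\<Phi> \<circ> D2 \<in> diff_ops sm (Suc (r + m))" by (rule subsetD[OF mono1])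
      thus ?thesis by (simp only: add_Suc)
    next
      assume h: "\<Phi> \<in> {\<Phi> \<in> HomK sm. \<forall>a. delta a \<Phi> \<in> diff_ops sm r}"
      hence hom: "\<Phi> \<in> HomK sm" and dP: "\<forall>a. delta a \<Phi> \<in> diff_ops sm r" by auto
      show ?thesis by (rule Ccase[OF K Suc.IH hom dP D2])
    qed
  qed
qed

theorem proposition9:
  fixes sm :: "'k::comm_ring_1 \<Rightarrow> 'a::ring_1 \<Rightarrow> 'a"
    and \<Delta>1 \<Delta>2 :: "'a \<Rightarrow> 'a" and n m :: nat
  assumes "K_ring sm"
    and "\<Delta>1 \<in> diff_ops sm n"
    and "\<Delta>2 \<in> diff_ops sm m"
  shows "\<Delta>1 \<circ> \<Delta>2 \<in> diff_ops sm (n + m)"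
  using main[OF assms(1) assms(2) assms(3)] .

end
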